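(* Let $f_\infty:(0,\infty)\to\mathbb{R}$ be defined by $f_\infty(x)=(x^2-1)^2+\frac{(x^2+1)^2}{x}(x^2-1)\left(\arctan(x)-\frac{\pi}{2}\right)$. Then $f_\infty(x)=0$ only for $x=1$, $f_\infty(x)>0$ for $x\in(0,1)$, and $f_\infty(x)<0$ for all $x>1$. *)

theory Defs
  imports Complex_Main
begin

definition f_inf :: "real \<Rightarrow> real" where
  "f_inf x = (x^2 - 1)^2 + ((x^2 + 1)^2 / x) * (x^2 - 1) * (arctan x - pi / 2)"

end

theory Submission
  imports Defs
begin

lemma arctan_lb:
  fixes t :: real
  assumes t: "t > 0"
  shows "t / (1 + t^2) < arctan t"
proof -
  let ?g = "\<lambda>s::real. arctan s - s / (1 + s^2)"
  have der: "DERIV ?g s :> 2 * s^2 / (1 + s^2)^2" for s :: real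
  proof -
    have "0 < 1 + s^2" using zero_le_power2 by (smt (verit))
    then have p: "1 + s^2 \<noteq> 0" "1 + s*s \<noteq> 0" by (simp_all add: power2_eq_square)
    have "DERIV ?g s :> inverse (1 + s^2) - ((1 * (1 + s^2) - s * (2 * s)) / (1 + s^2)^2)"
      by (auto intro!: derivative_eq_intros simp: p power2_eq_square)
    moreover have "inverse (1 + s^2) - ((1 * (1 + s^2) - s * (2 * s)) / (1 + s^2)^2) = 2 * s^2 / (1 + s^2)^2"
    proof -
      have e1: "1 * (1 + s^2) - s * (2 * s) = (1 + s^2) - 2 * s^2" by (simp add: power2_eq_square)
      have e2: "\<And>q a::real. q \<noteq> 0 \<Longrightarrow> inverse q - (q - a) / q^2 = a / q^2"
        by (simp add: field_simps power2_eq_square)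
      show ?thesis unfolding e1 by (rule e2[OF p(1)])
    qed
    ultimately show ?thesis by simp
  qed
  have "?g 0 < ?g t"
  proof (rule DERIV_pos_imp_increasing_open[OF t])
    fix s :: real assume "0 < s" "s < t"
    then show "\<exists>y. DERIV ?g s :> y \<and> 0 < y" proof (intro exI conjI)
      show "DERIV ?g s :> 2 * s^2 / (1 + s^2)^2" by (rule der)
      have "0 < 1 + s^2" using zero_le_power2 by (smt (verit))
      then show "0 < 2 * s^2 / (1 + s^2)^2" using \<open>0 < s\<close> by simp
    qed
  next
    show "continuous_on {0..t} ?g"
      by (intro continuous_at_imp_continuous_on ballI DERIV_isCont[OF der])
  qed
  then show ?thesis by simp
qed

lemma h_neg:
  fixes x :: real
  assumes x: "x > 0"
  shows "(x^2 - 1) + ((x^2 + 1)^2 / x) * (arctan x - pi / 2) < 0"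
proof -
  have ai: "arctan x - pi/2 = - arctan (1/x)" using arctan_inverse[of x] x by simp
  have "(1/x) / (1 + (1/x)^2) < arctan (1/x)" using arctan_lb[of "1/x"] x by simp
  moreover have "(1/x) / (1 + (1/x)^2) = x / (x^2 + 1)" using x by (simp add: field_simps power2_eq_square)
  ultimately have lb: "x / (x^2 + 1) < arctan (1/x)" by simp
  have "x^2 + 1 > 0" using zero_le_power2 by (smt (verit))
  then have pos: "(x^2 + 1)^2 / x > 0" using x by simp
  have "((x^2 + 1)^2 / x) * (x / (x^2 + 1)) < ((x^2 + 1)^2 / x) * arctan (1/x)"
    using mult_strict_left_mono[OF lb pos] .
  moreover have "((x^2 + 1)^2 / x) * (x / (x^2 + 1)) = x^2 + 1"
  proof -
    have e: "\<And>q y::real. q \<noteq> 0 \<Longrightarrow> y \<noteq> 0 \<Longrightarrow> (q^2 / y) * (y / q) = q"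
      by (simp add: field_simps power2_eq_square)
    show ?thesis using e[of "x^2 + 1" x] \<open>x^2 + 1 > 0\<close> x by linarith
  qed
  ultimately show ?thesis using ai by simp
qed

lemma f_factor: "f_inf x = (x^2 - 1) * ((x^2 - 1) + ((x^2 + 1)^2 / x) * (arctan x - pi / 2))"
proof -
  have e: "\<And>a c b::real. a^2 + c*a*b = a*(a + c*b)" by (simp add: algebra_simps power2_eq_square)
  show ?thesis unfolding f_inf_def by (rule e)
qed

theorem lemma3p3:
  shows "(\<forall>x::real. x > 0 \<longrightarrow> (f_inf x = 0 \<longleftrightarrow> x = 1))
    \<and> (\<forall>x::real. 0 < x \<and> x < 1 \<longrightarrow> f_inf x > 0)
    \<and> (\<forall>x::real. x > 1 \<longrightarrow> f_inf x < 0)"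
proof (intro conjI allI impI)
  fix x :: real assume x: "x > 0"
  have h: "(x^2 - 1) + ((x^2 + 1)^2 / x) * (arctan x - pi / 2) < 0" using h_neg x .
  have "x^2 - 1 = 0 \<longleftrightarrow> x = 1" using x by (simp add: power2_eq_1_iff) 
  then show "f_inf x = 0 \<longleftrightarrow> x = 1" using h by (auto simp: f_factor)
next
  fix x :: real assume x: "0 < x \<and> x < 1"
  have h: "(x^2 - 1) + ((x^2 + 1)^2 / x) * (arctan x - pi / 2) < 0" using h_neg x by simp
  have "x^2 < 1" using x by (simp add: power_less_one_iff)
  then show "f_inf x > 0" using h by (simp add: f_factor mult_neg_neg)
next
  fix x :: real assume x: "x > 1"
  have h: "(x^2 - 1) + ((x^2 + 1)^2 / x) * (arctan x - pi / 2) < 0" using h_neg x by simp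
  have "x^2 > 1" using x by (simp add: one_less_power)
  then show "f_inf x < 0" using h by (simp add: f_factor mult_pos_neg)
qed

end
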